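(* Let $G$ be a finite inverse semigroup acting by endomorphisms on the left of a locally finite inverse semigroup $A$, and let $I$ be the $\lambda$-semidirect product of $G$ acting on $A$. Then $I$ is locally finite. Moreover, if $\sigma:\mathbb{N}\to\mathbb{N}$ is non-decreasing and every $k$-generated subsemigroup of $A$ has cardinality at most $\sigma(k)$ (for all $k$), then every $m$-generated subsemigroup of $I$ has cardinality at most $|G|\,\sigma(m|G|)$. *)

theory Defs
  imports Main
begin

definition semigroup_on :: "'a set \<Rightarrow> ('a \<Rightarrow> 'a \<Rightarrow> 'a) \<Rightarrow> bool" where
  "semigroup_on S f \<longleftrightarrow>
     (\<forall>x\<in>S. \<forall>y\<in>S. f x y \<in> S) \<and>
     (\<forall>x\<in>S. \<forall>y\<in>S. \<forall>z\<in>S. f (f x y) z = f x (f y z))"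

definition inverse_semigroup_on :: "'a set \<Rightarrow> ('a \<Rightarrow> 'a \<Rightarrow> 'a) \<Rightarrow> bool" where
  "inverse_semigroup_on S f \<longleftrightarrow> semigroup_on S f \<and>
     (\<forall>a\<in>S. \<exists>!b. b \<in> S \<and> f (f a b) a = a \<and> f (f b a) b = b)"

definition sinv :: "'a set \<Rightarrow> ('a \<Rightarrow> 'a \<Rightarrow> 'a) \<Rightarrow> 'a \<Rightarrow> 'a" where
  "sinv S f a = (THE b. b \<in> S \<and> f (f a b) a = a \<and> f (f b a) b = b)"

inductive_set sg_gen :: "('a \<Rightarrow> 'a \<Rightarrow> 'a) \<Rightarrow> 'a set \<Rightarrow> 'a set"
  for f :: "'a \<Rightarrow> 'a \<Rightarrow> 'a" and X :: "'a set" where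
  gen_base: "x \<in> X \<Longrightarrow> x \<in> sg_gen f X"
| gen_mult: "x \<in> sg_gen f X \<Longrightarrow> y \<in> sg_gen f X \<Longrightarrow> f x y \<in> sg_gen f X"

definition locally_finite_on :: "'a set \<Rightarrow> ('a \<Rightarrow> 'a \<Rightarrow> 'a) \<Rightarrow> bool" where
  "locally_finite_on S f \<longleftrightarrow> (\<forall>X. X \<subseteq> S \<and> finite X \<longrightarrow> finite (sg_gen f X))"

definition acts_by_endos ::
  "'g set \<Rightarrow> ('g \<Rightarrow> 'g \<Rightarrow> 'g) \<Rightarrow> 'a set \<Rightarrow> ('a \<Rightarrow> 'a \<Rightarrow> 'a) \<Rightarrow> ('g \<Rightarrow> 'a \<Rightarrow> 'a) \<Rightarrow> bool" where
  "acts_by_endos G g A f act \<longleftrightarrow>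
     (\<forall>x\<in>G. \<forall>a\<in>A. act x a \<in> A) \<and>
     (\<forall>x\<in>G. \<forall>a\<in>A. \<forall>b\<in>A. act x (f a b) = f (act x a) (act x b)) \<and>
     (\<forall>x\<in>G. \<forall>y\<in>G. \<forall>a\<in>A. act (g x y) a = act x (act y a))"

text \<open>The lambda-semidirect product (Billhardt):
  carrier {(a,x). x x^{-1} . a = a}, product (a,x)(b,y) = (((xy)(xy)^{-1} . a)(x . b), xy).\<close>
definition lsd_carrier ::
  "'g set \<Rightarrow> ('g \<Rightarrow> 'g \<Rightarrow> 'g) \<Rightarrow> 'a set \<Rightarrow> ('g \<Rightarrow> 'a \<Rightarrow> 'a) \<Rightarrow> ('a \<times> 'g) set" where
  "lsd_carrier G g A act = {(a, x). a \<in> A \<and> x \<in> G \<and> act (g x (sinv G g x)) a = a}"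

definition lsd_mult ::
  "'g set \<Rightarrow> ('g \<Rightarrow> 'g \<Rightarrow> 'g) \<Rightarrow> ('a \<Rightarrow> 'a \<Rightarrow> 'a) \<Rightarrow> ('g \<Rightarrow> 'a \<Rightarrow> 'a)
     \<Rightarrow> ('a \<times> 'g) \<Rightarrow> ('a \<times> 'g) \<Rightarrow> ('a \<times> 'g)" where
  "lsd_mult G g f act p q =
     (let a = fst p; x = snd p; b = fst q; y = snd q; xy = g x y
      in (f (act (g xy (sinv G g xy)) a) (act x b), xy))"

end

theory Submission
  imports Defs
begin

lemma sinv_in:
  assumes "inverse_semigroup_on G g" "x \<in> G"
  shows "sinv G g x \<in> G"
proof -
  have "\<exists>!b. b \<in> G \<and> g (g x b) x = x \<and> g (g b x) b = b"
    using assms unfolding inverse_semigroup_on_def by blast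
  from theI'[OF this] show ?thesis unfolding sinv_def by blast
qed

lemma sg_sub:
  assumes "semigroup_on A f" "X \<subseteq> A"
  shows "sg_gen f X \<subseteq> A"
proof
  fix a assume "a \<in> sg_gen f X"
  then show "a \<in> A"
    by induction (use assms in \<open>auto simp: semigroup_on_def\<close>)
qed

lemma act_closed:
  assumes act: "acts_by_endos G g A f act" and sA: "semigroup_on A f" and XA: "X \<subseteq> A"
    and cl: "\<forall>z\<in>G. \<forall>x\<in>X. act z x \<in> X" and z: "z \<in> G"
    and a: "a \<in> sg_gen f X"
  shows "act z a \<in> sg_gen f X"
  using a
proof induction
  case (gen_base x)
  then show ?case using cl z by (auto intro: sg_gen.gen_base)
next
  case (gen_mult x y)
  have "x \<in> A" "y \<in> A" using gen_mult sg_sub[OF sA XA] by auto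
  then have "act z (f x y) = f (act z x) (act z y)"
    using act z unfolding acts_by_endos_def by blast
  then show ?case using gen_mult by (auto intro: sg_gen.gen_mult)
qed

lemma main_sub:
  assumes iG: "inverse_semigroup_on G g"
    and iA: "inverse_semigroup_on A f"
    and act: "acts_by_endos G g A f act"
    and Y: "Y \<subseteq> lsd_carrier G g A act"
  defines "X \<equiv> (\<lambda>(z,p). act z (fst p)) ` (G \<times> Y)"
  shows "X \<subseteq> A" "sg_gen (lsd_mult G g f act) Y \<subseteq> sg_gen f X \<times> G"
proof -
  have sA: "semigroup_on A f" using iA unfolding inverse_semigroup_on_def by blast
  have sG: "semigroup_on G g" using iG unfolding inverse_semigroup_on_def by blast
  show XA: "X \<subseteq> A"
  proof
    fix x assume "x \<in> X"
    then obtain z p where w: "z \<in> G" "p \<in> Y" and xe: "x = act z (fst p)" unfolding X_def by auto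
    have "fst p \<in> A" using w Y unfolding lsd_carrier_def by auto
    then show "x \<in> A" using w xe act unfolding acts_by_endos_def by blast
  qed
  have cl: "\<forall>z\<in>G. \<forall>x\<in>X. act z x \<in> X"
  proof (intro ballI)
    fix z x assume z: "z \<in> G" and x: "x \<in> X"
    then obtain w p where w: "w \<in> G" "p \<in> Y" and xe: "x = act w (fst p)" unfolding X_def by auto
    have "fst p \<in> A" using w Y unfolding lsd_carrier_def by auto
    then have "act z x = act (g z w) (fst p)" using xe act z w unfolding acts_by_endos_def by auto
    moreover have "g z w \<in> G" using sG z w unfolding semigroup_on_def by blast
    ultimately show "act z x \<in> X" using w unfolding X_def
      by (intro image_eqI[where x="(g z w, p)"]) auto
  qed
  show "sg_gen (lsd_mult G g f act) Y \<subseteq> sg_gen f X \<times> G"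
  proof
    fix q assume "q \<in> sg_gen (lsd_mult G g f act) Y"
    then show "q \<in> sg_gen f X \<times> G"
    proof induction
      case (gen_base q)
      obtain a x where q: "q = (a, x)" by force
      have ax: "x \<in> G" "act (g x (sinv G g x)) a = a"
        using gen_base Y q unfolding lsd_carrier_def by auto
      have "g x (sinv G g x) \<in> G" using sG ax sinv_in[OF iG ax(1)] unfolding semigroup_on_def by blast
      then have "a \<in> X" using ax gen_base q unfolding X_def
        by (intro image_eqI[where x="(g x (sinv G g x), (a,x))"]) auto
      then show ?case using q ax by (auto intro: sg_gen.gen_base)
    next
      case (gen_mult p q)
      obtain a x where p: "p = (a, x)" by force
      obtain b y where q: "q = (b, y)" by force
      have in1: "a \<in> sg_gen f X" "x \<in> G" "b \<in> sg_gen f X" "y \<in> G" using gen_mult p q by auto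
      have xy: "g x y \<in> G" using sG in1 unfolding semigroup_on_def by blast
      have e: "g (g x y) (sinv G g (g x y)) \<in> G"
        using sG xy sinv_in[OF iG xy] unfolding semigroup_on_def by blast
      have "act (g (g x y) (sinv G g (g x y))) a \<in> sg_gen f X"
        by (rule act_closed[OF act sA XA cl e in1(1)])
      moreover have "act x b \<in> sg_gen f X"
        by (rule act_closed[OF act sA XA cl in1(2) in1(3)])
      ultimately have "f (act (g (g x y) (sinv G g (g x y))) a) (act x b) \<in> sg_gen f X"
        by (rule sg_gen.gen_mult)
      moreover have "lsd_mult G g f act p q = (f (act (g (g x y) (sinv G g (g x y))) a) (act x b), g x y)"
        unfolding lsd_mult_def p q by (simp add: Let_def)
      ultimately show ?case using xy by simp
    qed
  qed
qed

theorem theorem2: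
  fixes G :: "'g set" and g :: "'g \<Rightarrow> 'g \<Rightarrow> 'g"
    and A :: "'a set" and f :: "'a \<Rightarrow> 'a \<Rightarrow> 'a"
    and act :: "'g \<Rightarrow> 'a \<Rightarrow> 'a"
  assumes "inverse_semigroup_on G g" and "finite G"
    and "inverse_semigroup_on A f" and "locally_finite_on A f"
    and "acts_by_endos G g A f act"
  shows "locally_finite_on (lsd_carrier G g A act) (lsd_mult G g f act)
    \<and> (\<forall>\<sigma> :: nat \<Rightarrow> nat. mono \<sigma> \<longrightarrow>
         (\<forall>k X. X \<subseteq> A \<and> finite X \<and> card X \<le> k \<longrightarrow>
              finite (sg_gen f X) \<and> card (sg_gen f X) \<le> \<sigma> k) \<longrightarrow>
         (\<forall>m Y. Y \<subseteq> lsd_carrier G g A act \<and> finite Y \<and> card Y \<le> m \<longrightarrow>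
              finite (sg_gen (lsd_mult G g f act) Y) \<and>
              card (sg_gen (lsd_mult G g f act) Y) \<le> card G * \<sigma> (m * card G)))"
proof -
  note ms = main_sub[OF assms(1) assms(3) assms(5)]
  have fin: "finite (sg_gen (lsd_mult G g f act) Y)"
    if Y: "Y \<subseteq> lsd_carrier G g A act" "finite Y" for Y
  proof -
    let ?X = "(\<lambda>(z,p). act z (fst p)) ` (G \<times> Y)"
    have "finite ?X" using Y assms(2) by auto
    with ms(1)[OF Y(1)] assms(4) have "finite (sg_gen f ?X)"
      unfolding locally_finite_on_def by (elim allE[where x="?X"]) simp
    then have "finite (sg_gen f ?X \<times> G)" using assms(2) by simp
    then show ?thesis using ms(2)[OF Y(1)] by (rule finite_subset[rotated])
  qed
  have bound: "card (sg_gen (lsd_mult G g f act) Y) \<le> card G * \<sigma> (m * card G)"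
    if hs: "\<forall>k X. X \<subseteq> A \<and> finite X \<and> card X \<le> k \<longrightarrow>
              finite (sg_gen f X) \<and> card (sg_gen f X) \<le> \<sigma> k"
    and Y: "Y \<subseteq> lsd_carrier G g A act" "finite Y" "card Y \<le> m" for \<sigma> :: "nat \<Rightarrow> nat" and m Y
  proof -
    let ?X = "(\<lambda>(z,p). act z (fst p)) ` (G \<times> Y)"
    have fGY: "finite (G \<times> Y)" using Y(2) assms(2) by simp
    have "card ?X \<le> card (G \<times> Y)" by (rule card_image_le[OF fGY])
    also have "\<dots> = card G * card Y" by (simp add: card_cartesian_product)
    also have "\<dots> \<le> card G * m" using Y(3) by (rule mult_le_mono2)
    also have "\<dots> = m * card G" by (rule mult.commute)
    finally have cX: "card ?X \<le> m * card G" .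
    have "finite ?X" using fGY by (rule finite_imageI)
    then have h: "finite (sg_gen f ?X) \<and> card (sg_gen f ?X) \<le> \<sigma> (m * card G)"
    proof -
      have "?X \<subseteq> A \<and> finite ?X \<and> card ?X \<le> m * card G"
        using ms(1)[OF Y(1)] \<open>finite ?X\<close> cX by blast
      then show ?thesis using hs by blast
    qed
    have "card (sg_gen (lsd_mult G g f act) Y) \<le> card (sg_gen f ?X \<times> G)"
    proof (rule card_mono)
      show "finite (sg_gen f ?X \<times> G)" using h assms(2) by simp
    qed (rule ms(2)[OF Y(1)])
    also have "\<dots> = card (sg_gen f ?X) * card G" by (simp add: card_cartesian_product)
    also have "\<dots> \<le> \<sigma> (m * card G) * card G" using h by (intro mult_le_mono1) blast
    finally show ?thesis by (simp add: mult.commute)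
  qed
  show ?thesis
    unfolding locally_finite_on_def
  proof (rule conjI)
    show "\<forall>X. X \<subseteq> lsd_carrier G g A act \<and> finite X \<longrightarrow> finite (sg_gen (lsd_mult G g f act) X)"
      using fin by blast
  next
    show "\<forall>\<sigma> :: nat \<Rightarrow> nat. mono \<sigma> \<longrightarrow>
         (\<forall>k X. X \<subseteq> A \<and> finite X \<and> card X \<le> k \<longrightarrow>
              finite (sg_gen f X) \<and> card (sg_gen f X) \<le> \<sigma> k) \<longrightarrow>
         (\<forall>m Y. Y \<subseteq> lsd_carrier G g A act \<and> finite Y \<and> card Y \<le> m \<longrightarrow>
              finite (sg_gen (lsd_mult G g f act) Y) \<and>
              card (sg_gen (lsd_mult G g f act) Y) \<le> card G * \<sigma> (m * card G))"
    proof (intro allI impI)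
      fix \<sigma> :: "nat \<Rightarrow> nat" and m Y
      assume "mono \<sigma>"
      assume hs: "\<forall>k X. X \<subseteq> A \<and> finite X \<and> card X \<le> k \<longrightarrow>
              finite (sg_gen f X) \<and> card (sg_gen f X) \<le> \<sigma> k"
        and Y: "Y \<subseteq> lsd_carrier G g A act \<and> finite Y \<and> card Y \<le> m"
      have "finite (sg_gen (lsd_mult G g f act) Y)" using fin[of Y] Y by blast
      moreover have "card (sg_gen (lsd_mult G g f act) Y) \<le> card G * \<sigma> (m * card G)"
        using bound[OF hs, of Y m] Y by blast
      ultimately show "finite (sg_gen (lsd_mult G g f act) Y) \<and>
              card (sg_gen (lsd_mult G g f act) Y) \<le> card G * \<sigma> (m * card G)" ..
    qed
  qed
qed

end
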